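(* Let $\mathcal{H}$ be a separable Hilbert space, let $J$ be a finite or countably infinite index set, and let $(\rho_j)_{j\in J}$ be density operators on $\mathcal{H}$. Let $f:(0,1]^J\to\mathbb{R}$ be an evaluation function for uniform discrimination (defined in the context). Suppose the instrument $(\mathcal{I}_\omega)_{\omega\in J\cup\{?\}}$ is a uniform unambiguous discrimination measurement between $(\rho_j)_{j\in J}$ that is optimal with respect to $f$, and suppose that $\sup\{\operatorname{tr}[\mathcal{I}_j\rho_j]\mid j\in J\}<1$. Then the states $$\left(\frac{\mathcal{I}_?\rho_j}{\operatorname{tr}[\mathcal{I}_?\rho_j]}\right)_{j\in J}$$ (the post-measurement states conditioned on the inconclusive outcome $?$) are not uniformly distinguishable.
   Context: States are density operators $\rho$ on $\mathcal{H}$: trace-class operators with $\rho\geq 0$ and $\operatorname{tr}\rho=1$; $\mathfrak{T}(\mathcal{H})$ denotes the Banach space of trace-class operators. An instrument with countable outcome set $\Omega$ is a family $(\mathcal{I}_\omega)_{\omega\in\Omega}$ of trace-norm-bounded linear maps $\mathcal{I}_\omega:\mathfrak{T}(\mathcal{H})\to\mathfrak{T}(\mathcal{H})$ such that each $\mathcal{I}_\omega$ is completely positive (i.e. $\mathcal{I}_\omega\otimes\mathrm{id}_{\mathbb{C}^{n\times n}}$ is positive for all $n\in\mathbb{N}$) and $\operatorname{tr}[(\sum_\omega\mathcal{I}_\omega)\rho]=\operatorname{tr}\rho$ for all $\rho\in\mathfrak{T}(\mathcal{H})$. A uniform unambiguous discrimination measurement between states $(\rho_j)_{j\in J}$ is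 an instrument $(\mathcal{I}_\omega)_{\omega\in J\cup\{?\}}$ (with $?$ an extra "inconclusive" outcome not in $J$) such that $\operatorname{tr}[\mathcal{I}_j\rho_k]=0$ for all $j\neq k$ in $J$, and $\inf\{\operatorname{tr}[\mathcal{I}_j\rho_j]\mid j\in J\}>0$. States $(\rho_j)_{j\in J}$ are uniformly distinguishable if at least one uniform unambiguous discrimination measurement between them exists. An evaluation function for uniform discrimination is a function $f:(0,1]^J\to\mathbb{R}$ such that for all $(x_j),(y_j)\in(0,1]^J$, if $\inf\{x_j-y_j\mid j\in J\}>0$ then $f((x_j))-f((y_j))>0$. A uniform unambiguous discrimination measurement between $(\rho_j)_{j\in J}$ is optimal with respect to $f$ if no other uniform unambiguous discrimination measurement $(\mathcal{I}'_\omega)$ between $(\rho_j)_{j\in J}$ satisfies $f((\operatorname{tr}[\mathcal{I}'_j\rho_j])_j)>f((\operatorname{tr}[\mathcal{I}_j\rho_j])_j)$. *)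

theory Defs
  imports "HOL-Analysis.Analysis"
begin

text \<open>
  Concrete model of a separable Hilbert space: H = l2('b) for a countable
  (finite or countably infinite, nonempty) index type 'b of an orthonormal basis.
  Vectors are functions 'b => complex; (bounded) operators are represented by
  their matrices T i j = <e_i, T e_j> with respect to the standard basis.
\<close>

type_synonym 'b hvec = "'b \<Rightarrow> complex"
type_synonym 'b opr = "'b \<Rightarrow> 'b \<Rightarrow> complex"

definition l2 :: "'b hvec set" where
  "l2 = {v. (\<lambda>i. (cmod (v i))\<^sup>2) summable_on UNIV}"

definition l2norm :: "'b hvec \<Rightarrow> real" where
  "l2norm v = sqrt (\<Sum>\<^sub>\<infinity>i. (cmod (v i))\<^sup>2)"

definition hinner :: "'b hvec \<Rightarrow> 'b hvec \<Rightarrow> complex" where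
  "hinner u v = (\<Sum>\<^sub>\<infinity>i. cnj (u i) * v i)"

definition apply_op :: "'b opr \<Rightarrow> 'b hvec \<Rightarrow> 'b hvec" where
  "apply_op T v = (\<lambda>i. \<Sum>\<^sub>\<infinity>j. T i j * v j)"

definition bounded_opr :: "'b opr \<Rightarrow> bool" where
  "bounded_opr T \<longleftrightarrow>
     (\<forall>v\<in>l2. \<forall>i. (\<lambda>j. T i j * v j) summable_on UNIV) \<and>
     (\<exists>C. \<forall>v\<in>l2. apply_op T v \<in> l2 \<and> l2norm (apply_op T v) \<le> C * l2norm v)"

definition orthonormal_on :: "'b set \<Rightarrow> ('b \<Rightarrow> 'b hvec) \<Rightarrow> bool" where
  "orthonormal_on K e \<longleftrightarrow>
     (\<forall>k\<in>K. e k \<in> l2) \<and> (\<forall>k\<in>K. \<forall>k'\<in>K. hinner (e k) (e k') = (if k = k' then 1 else 0))"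

definition tn_sums :: "'b opr \<Rightarrow> real set" where
  "tn_sums T = {\<Sum>\<^sub>\<infinity>k\<in>K. cmod (hinner (f k) (apply_op T (e k))) | K e f.
                 orthonormal_on K e \<and> orthonormal_on K f}"

definition trace_class :: "'b opr \<Rightarrow> bool" where
  "trace_class T \<longleftrightarrow> bounded_opr T \<and>
     (\<exists>C. \<forall>K e f. orthonormal_on K e \<and> orthonormal_on K f \<longrightarrow>
        (\<lambda>k. cmod (hinner (f k) (apply_op T (e k)))) summable_on K \<and>
        (\<Sum>\<^sub>\<infinity>k\<in>K. cmod (hinner (f k) (apply_op T (e k)))) \<le> C)"

definition trace_norm :: "'b opr \<Rightarrow> real" where
  "trace_norm T = Sup (tn_sums T)"

definition trace :: "'b opr \<Rightarrow> complex" where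
  "trace T = (\<Sum>\<^sub>\<infinity>i. T i i)"

definition positive_opr :: "'b opr \<Rightarrow> bool" where
  "positive_opr T \<longleftrightarrow> bounded_opr T \<and>
     (\<forall>v\<in>l2. Im (hinner v (apply_op T v)) = 0 \<and> Re (hinner v (apply_op T v)) \<ge> 0)"

definition density_op :: "'b opr \<Rightarrow> bool" where
  "density_op \<rho> \<longleftrightarrow> trace_class \<rho> \<and> positive_opr \<rho> \<and> trace \<rho> = 1"

definition tc_map :: "('b opr \<Rightarrow> 'b opr) \<Rightarrow> bool" where
  "tc_map \<Phi> \<longleftrightarrow>
     (\<forall>T. trace_class T \<longrightarrow> trace_class (\<Phi> T)) \<and>
     (\<forall>S T a b. trace_class S \<longrightarrow> trace_class T \<longrightarrow>
        \<Phi> (\<lambda>i j. a * S i j + b * T i j) = (\<lambda>i j. a * \<Phi> S i j + b * \<Phi> T i j)) \<and>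
     (\<exists>C. \<forall>T. trace_class T \<longrightarrow> trace_norm (\<Phi> T) \<le> C * trace_norm T)"

text \<open>Positivity of an n x n block operator (T_ab) on H (x) C^n = H^n.\<close>
definition block_positive :: "nat \<Rightarrow> (nat \<Rightarrow> nat \<Rightarrow> 'b opr) \<Rightarrow> bool" where
  "block_positive n Tb \<longleftrightarrow>
     (\<forall>a<n. \<forall>b<n. bounded_opr (Tb a b)) \<and>
     (\<forall>v :: nat \<Rightarrow> 'b hvec. (\<forall>a<n. v a \<in> l2) \<longrightarrow>
        Im (\<Sum>a<n. \<Sum>b<n. hinner (v a) (apply_op (Tb a b) (v b))) = 0 \<and>
        Re (\<Sum>a<n. \<Sum>b<n. hinner (v a) (apply_op (Tb a b) (v b))) \<ge> 0)"

text \<open>Complete positivity: Phi (x) id_{C^{n x n}} is positive on T(H (x) C^n) for all n.\<close>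
definition completely_positive :: "('b opr \<Rightarrow> 'b opr) \<Rightarrow> bool" where
  "completely_positive \<Phi> \<longleftrightarrow>
     (\<forall>n Tb. (\<forall>a<n. \<forall>b<n. trace_class (Tb a b)) \<and> block_positive n Tb \<longrightarrow>
        block_positive n (\<lambda>a b. \<Phi> (Tb a b)))"

definition instrument :: "('o::countable \<Rightarrow> 'b opr \<Rightarrow> 'b opr) \<Rightarrow> bool" where
  "instrument I \<longleftrightarrow>
     (\<forall>\<omega>. tc_map (I \<omega>) \<and> completely_positive (I \<omega>)) \<and>
     (\<forall>\<rho>. trace_class \<rho> \<longrightarrow> ((\<lambda>\<omega>. trace (I \<omega> \<rho>)) has_sum trace \<rho>) UNIV)"

text \<open>Outcome set J \<union> {?} is modelled as 'j option, with None = ?.\<close>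
definition uud_measurement :: "('j::countable \<Rightarrow> 'b opr) \<Rightarrow> ('j option \<Rightarrow> 'b opr \<Rightarrow> 'b opr) \<Rightarrow> bool" where
  "uud_measurement \<rho> I \<longleftrightarrow> instrument I \<and>
     (\<forall>j k. j \<noteq> k \<longrightarrow> trace (I (Some j) (\<rho> k)) = 0) \<and>
     (INF j. Re (trace (I (Some j) (\<rho> j)))) > 0"

definition uniformly_distinguishable :: "('j::countable \<Rightarrow> 'b opr) \<Rightarrow> bool" where
  "uniformly_distinguishable \<rho> \<longleftrightarrow> (\<exists>I. uud_measurement \<rho> I)"

definition evaluation_function :: "(('j \<Rightarrow> real) \<Rightarrow> real) \<Rightarrow> bool" where
  "evaluation_function f \<longleftrightarrow>
     (\<forall>x y. (\<forall>j. x j \<in> {0<..1}) \<longrightarrow> (\<forall>j. y j \<in> {0<..1}) \<longrightarrow>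
        (INF j. x j - y j) > 0 \<longrightarrow> f x - f y > 0)"

definition success_probs :: "('j \<Rightarrow> 'b opr) \<Rightarrow> ('j option \<Rightarrow> 'b opr \<Rightarrow> 'b opr) \<Rightarrow> 'j \<Rightarrow> real" where
  "success_probs \<rho> I = (\<lambda>j. Re (trace (I (Some j) (\<rho> j))))"

definition optimal_uud :: "(('j::countable \<Rightarrow> real) \<Rightarrow> real) \<Rightarrow> ('j \<Rightarrow> 'b opr) \<Rightarrow> ('j option \<Rightarrow> 'b opr \<Rightarrow> 'b opr) \<Rightarrow> bool" where
  "optimal_uud f \<rho> I \<longleftrightarrow> uud_measurement \<rho> I \<and>
     \<not> (\<exists>I'. uud_measurement \<rho> I' \<and> f (success_probs \<rho> I') > f (success_probs \<rho> I))"

end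

theory Submission
  imports Defs
begin


definition dlt :: "'b \<Rightarrow> 'b hvec" where "dlt i = (\<lambda>k. if k = i then 1 else 0)"

lemma has_sum_single_pt:
  assumes "\<And>j. j \<noteq> i \<Longrightarrow> g j = 0"
  shows "(g has_sum g i) UNIV"
proof -
  have "(g has_sum g i) UNIV \<longleftrightarrow> (g has_sum g i) {i}"
    by (rule has_sum_cong_neutral) (auto simp: assms)
  moreover have "(g has_sum g i) {i}" using has_sum_finite[of "{i}" g] by simp
  ultimately show ?thesis by simp
qed

lemma infsum_single_pt:
  assumes "\<And>j. j \<noteq> i \<Longrightarrow> g j = 0"
  shows "infsum g UNIV = g i"
  by (rule infsumI[OF has_sum_single_pt[OF assms]])

lemma dlt_l2: "dlt i \<in> l2"
proof -
  have "((\<lambda>k. (cmod (dlt i k))\<^sup>2) has_sum (cmod (dlt i i))\<^sup>2) UNIV"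
    by (rule has_sum_single_pt) (simp add: dlt_def)
  then show ?thesis unfolding l2_def summable_on_def by blast
qed

lemma apply_op_dlt: "apply_op T (dlt i) = (\<lambda>k. T k i)"
  unfolding apply_op_def
  by (rule ext, subst infsum_single_pt[where i=i]) (auto simp: dlt_def)

lemma hinner_dlt: "hinner (dlt i) w = w i"
  unfolding hinner_def
  by (subst infsum_single_pt[where i=i]) (auto simp: dlt_def)

lemma orthonormal_dlt: "orthonormal_on UNIV dlt"
  unfolding orthonormal_on_def by (simp add: dlt_l2 hinner_dlt) (simp add: dlt_def)


lemma sq_tri: "(cmod (a + b))\<^sup>2 \<le> 2 * (cmod a)\<^sup>2 + 2 * (cmod b)\<^sup>2"
proof -
  have "cmod (a + b) \<le> cmod a + cmod b" by (rule norm_triangle_ineq)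
  then have "(cmod (a + b))\<^sup>2 \<le> (cmod a + cmod b)\<^sup>2"
    by (intro power_mono) auto
  also have "\<dots> \<le> 2 * (cmod a)\<^sup>2 + 2 * (cmod b)\<^sup>2"
  proof -
    have "0 \<le> (cmod a - cmod b)\<^sup>2" by simp
    then show ?thesis unfolding power2_diff power2_sum by linarith
  qed
  finally show ?thesis .
qed

lemma l2_summ: "u \<in> l2 \<Longrightarrow> (\<lambda>i. (cmod (u i))\<^sup>2) summable_on UNIV"
  by (simp add: l2_def)

lemma l2norm_sq: "u \<in> l2 \<Longrightarrow> (l2norm u)\<^sup>2 = (\<Sum>\<^sub>\<infinity>i. (cmod (u i))\<^sup>2)"
proof -
  have "(\<Sum>\<^sub>\<infinity>i. (cmod (u i))\<^sup>2) \<ge> 0" by (rule infsum_nonneg) simp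
  then show ?thesis unfolding l2norm_def by simp
qed

lemma l2norm_nonneg: "l2norm u \<ge> 0"
proof -
  have "(\<Sum>\<^sub>\<infinity>i. (cmod (u i))\<^sup>2) \<ge> 0" by (rule infsum_nonneg) simp
  then show ?thesis unfolding l2norm_def by simp
qed

lemma l2_add:
  assumes "u \<in> l2" "v \<in> l2"
  shows "(\<lambda>i. u i + v i) \<in> l2"
    and "(l2norm (\<lambda>i. u i + v i))\<^sup>2 \<le> 2 * (l2norm u)\<^sup>2 + 2 * (l2norm v)\<^sup>2"
proof -
  have s: "(\<lambda>i. 2 * (cmod (u i))\<^sup>2 + 2 * (cmod (v i))\<^sup>2) summable_on UNIV"
    using assms by (intro summable_on_add summable_on_cmult_right) (auto simp: l2_summ)
  have s2: "(\<lambda>i. (cmod (u i + v i))\<^sup>2) summable_on UNIV"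
    by (rule summable_on_comparison_test[OF s]) (auto simp: sq_tri)
  then show "(\<lambda>i. u i + v i) \<in> l2" by (simp add: l2_def)
  then have "(l2norm (\<lambda>i. u i + v i))\<^sup>2 = (\<Sum>\<^sub>\<infinity>i. (cmod (u i + v i))\<^sup>2)"
    using l2norm_sq by force
  also have "\<dots> \<le> (\<Sum>\<^sub>\<infinity>i. 2 * (cmod (u i))\<^sup>2 + 2 * (cmod (v i))\<^sup>2)"
    by (rule infsum_mono[OF s2 s]) (simp add: sq_tri)
  also have "\<dots> = 2 * (l2norm u)\<^sup>2 + 2 * (l2norm v)\<^sup>2"
    using assms
    by (subst infsum_add) (auto simp: l2_summ summable_on_cmult_right infsum_cmult_right l2norm_sq)
  finally show "(l2norm (\<lambda>i. u i + v i))\<^sup>2 \<le> 2 * (l2norm u)\<^sup>2 + 2 * (l2norm v)\<^sup>2" .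
qed

lemma l2_prod:
  assumes "u \<in> l2" "v \<in> l2"
  shows "(\<lambda>i. cnj (u i) * v i) summable_on UNIV"
proof -
  have s: "(\<lambda>i. ((cmod (u i))\<^sup>2 + (cmod (v i))\<^sup>2) / 2) summable_on UNIV"
  proof -
    have "(\<lambda>i. (1/2) * ((cmod (u i))\<^sup>2 + (cmod (v i))\<^sup>2)) summable_on UNIV"
      using assms by (intro summable_on_cmult_right summable_on_add) (auto simp: l2_summ)
    then show ?thesis by simp
  qed
  have b: "norm (cnj (u i) * v i) \<le> ((cmod (u i))\<^sup>2 + (cmod (v i))\<^sup>2) / 2" for i
  proof -
    have "norm (cnj (u i) * v i) = cmod (u i) * cmod (v i)" by (simp add: norm_mult)
    also have "\<dots> \<le> ((cmod (u i))\<^sup>2 + (cmod (v i))\<^sup>2) / 2"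
    proof -
      have "0 \<le> (cmod (u i) - cmod (v i))\<^sup>2" by simp
      then have "2 * (cmod (u i) * cmod (v i)) \<le> (cmod (u i))\<^sup>2 + (cmod (v i))\<^sup>2" unfolding power2_diff by linarith
      then show ?thesis by (simp add: field_simps)
    qed
    finally show ?thesis .
  qed
  have "(\<lambda>i. norm (cnj (u i) * v i)) summable_on UNIV"
  proof (rule summable_on_comparison_test[OF s])
    fix x show "norm (cnj (u x) * v x) \<le> ((cmod (u x))\<^sup>2 + (cmod (v x))\<^sup>2) / 2" by (rule b)
  qed simp
  then show ?thesis by (rule abs_summable_summable)
qed

lemma hinner_add_right:
  assumes "u \<in> l2" "x \<in> l2" "y \<in> l2"
  shows "hinner u (\<lambda>i. x i + y i) = hinner u x + hinner u y"
  unfolding hinner_def using l2_prod[OF assms(1,2)] l2_prod[OF assms(1,3)]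
  by (subst infsum_add[symmetric]) (auto simp: distrib_left)


lemma bounded_rows: "bounded_opr A \<Longrightarrow> v \<in> l2 \<Longrightarrow> (\<lambda>j. A i j * v j) summable_on UNIV"
  unfolding bounded_opr_def by blast

lemma bounded_l2: "bounded_opr A \<Longrightarrow> v \<in> l2 \<Longrightarrow> apply_op A v \<in> l2"
  unfolding bounded_opr_def by blast

lemma bounded_C: "bounded_opr A \<Longrightarrow> \<exists>C. \<forall>v\<in>l2. l2norm (apply_op A v) \<le> C * l2norm v"
  unfolding bounded_opr_def by blast

lemma apply_op_add:
  fixes A B :: "'b opr"
  assumes "bounded_opr A" "bounded_opr B" "v \<in> l2"
  shows "apply_op (\<lambda>i j. A i j + B i j) v = (\<lambda>i. apply_op A v i + apply_op B v i)"
  unfolding apply_op_def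
  using bounded_rows[OF assms(1,3)] bounded_rows[OF assms(2,3)]
  by (intro ext, subst infsum_add[symmetric]) (auto simp: distrib_right)

lemma sq_bound:
  fixes x C y :: real
  assumes "x \<le> C * y" "0 \<le> x" "0 \<le> y"
  shows "x\<^sup>2 \<le> C\<^sup>2 * y\<^sup>2"
proof -
  have "x\<^sup>2 \<le> (C * y)\<^sup>2" using assms by (intro power_mono) auto
  then show ?thesis by (simp add: power_mult_distrib)
qed

lemma bounded_add:
  fixes A B :: "'b opr"
  assumes "bounded_opr A" "bounded_opr B"
  shows "bounded_opr (\<lambda>i j. A i j + B i j)"
proof -
  obtain CA where CA: "\<forall>v\<in>l2. l2norm (apply_op A v) \<le> CA * l2norm v" using bounded_C[OF assms(1)] by blast
  obtain CB where CB: "\<forall>v\<in>l2. l2norm (apply_op B v) \<le> CB * l2norm v" using bounded_C[OF assms(2)] by blast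
  define C where "C = sqrt (2 * CA\<^sup>2 + 2 * CB\<^sup>2)"
  have rows: "\<forall>v\<in>(l2::'b hvec set). \<forall>i. (\<lambda>j. (A i j + B i j) * v j) summable_on UNIV"
  proof (intro ballI allI)
    fix v :: "'b hvec" and i assume v: "v \<in> l2"
    show "(\<lambda>j. (A i j + B i j) * v j) summable_on UNIV"
      using summable_on_add[OF bounded_rows[OF assms(1) v] bounded_rows[OF assms(2) v]]
      by (simp add: distrib_right)
  qed
  have main: "apply_op (\<lambda>i j. A i j + B i j) v \<in> l2 \<and> l2norm (apply_op (\<lambda>i j. A i j + B i j) v) \<le> C * l2norm v"
    if v: "v \<in> l2" for v :: "'b hvec"
  proof -
    have e: "apply_op (\<lambda>i j. A i j + B i j) v = (\<lambda>i. apply_op A v i + apply_op B v i)"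
      by (rule apply_op_add[OF assms v])
    have la: "apply_op A v \<in> l2" "apply_op B v \<in> l2" using bounded_l2 assms v by auto
    have "(l2norm (apply_op (\<lambda>i j. A i j + B i j) v))\<^sup>2 \<le> 2 * (l2norm (apply_op A v))\<^sup>2 + 2 * (l2norm (apply_op B v))\<^sup>2"
      unfolding e by (rule l2_add(2)[OF la])
    also have "\<dots> \<le> 2 * (CA\<^sup>2 * (l2norm v)\<^sup>2) + 2 * (CB\<^sup>2 * (l2norm v)\<^sup>2)"
    proof -
      have "(l2norm (apply_op A v))\<^sup>2 \<le> CA\<^sup>2 * (l2norm v)\<^sup>2"
        by (rule sq_bound) (use CA v l2norm_nonneg in auto)
      moreover have "(l2norm (apply_op B v))\<^sup>2 \<le> CB\<^sup>2 * (l2norm v)\<^sup>2"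
        by (rule sq_bound) (use CB v l2norm_nonneg in auto)
      ultimately show ?thesis by linarith
    qed
    also have "\<dots> = (2 * CA\<^sup>2 + 2 * CB\<^sup>2) * (l2norm v)\<^sup>2" by (simp add: algebra_simps)
    finally have "l2norm (apply_op (\<lambda>i j. A i j + B i j) v) \<le> sqrt ((2 * CA\<^sup>2 + 2 * CB\<^sup>2) * (l2norm v)\<^sup>2)"
      using l2norm_nonneg real_le_rsqrt by blast
    also have "\<dots> = C * l2norm v" unfolding C_def using l2norm_nonneg[of v]
      by (simp add: real_sqrt_mult)
    finally show ?thesis using e l2_add(1)[OF la] by simp
  qed
  have m2: "\<forall>v\<in>(l2::'b hvec set). apply_op (\<lambda>i j. A i j + B i j) v \<in> l2 \<and> l2norm (apply_op (\<lambda>i j. A i j + B i j) v) \<le> C * l2norm v"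
    using main by blast
  show ?thesis unfolding bounded_opr_def by (intro conjI exI[of _ C] rows m2)
qed


lemma tc_bounded: "trace_class T \<Longrightarrow> bounded_opr T"
  unfolding trace_class_def by blast

lemma tc_C: "trace_class T \<Longrightarrow> \<exists>C. \<forall>K e f. orthonormal_on K e \<and> orthonormal_on K f \<longrightarrow>
        (\<lambda>k. cmod (hinner (f k) (apply_op T (e k)))) summable_on K \<and>
        (\<Sum>\<^sub>\<infinity>k\<in>K. cmod (hinner (f k) (apply_op T (e k)))) \<le> C"
  unfolding trace_class_def by blast

lemma on_l2: "orthonormal_on K e \<Longrightarrow> k \<in> K \<Longrightarrow> e k \<in> l2"
  unfolding orthonormal_on_def by blast

lemma term_add:
  fixes A B :: "'b opr"
  assumes "bounded_opr A" "bounded_opr B" "u \<in> l2" "v \<in> l2"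
  shows "cmod (hinner u (apply_op (\<lambda>i j. A i j + B i j) v)) \<le>
         cmod (hinner u (apply_op A v)) + cmod (hinner u (apply_op B v))"
proof -
  have "hinner u (apply_op (\<lambda>i j. A i j + B i j) v) = hinner u (apply_op A v) + hinner u (apply_op B v)"
    unfolding apply_op_add[OF assms(1,2,4)]
    by (rule hinner_add_right) (use assms bounded_l2 in auto)
  then show ?thesis by (simp add: norm_triangle_ineq)
qed

lemma tc_add:
  fixes A B :: "'b opr"
  assumes "trace_class A" "trace_class B"
  shows "trace_class (\<lambda>i j. A i j + B i j)"
    and "trace_norm (\<lambda>i j. A i j + B i j) \<le> trace_norm A + trace_norm B"
proof -
  have bA: "bounded_opr A" and bB: "bounded_opr B" using assms tc_bounded by auto
  obtain CA where CA: "\<forall>K e f. orthonormal_on K e \<and> orthonormal_on K f \<longrightarrow>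
        (\<lambda>k. cmod (hinner (f k) (apply_op A (e k)))) summable_on K \<and>
        (\<Sum>\<^sub>\<infinity>k\<in>K. cmod (hinner (f k) (apply_op A (e k)))) \<le> CA" using tc_C[OF assms(1)] by blast
  obtain CB where CB: "\<forall>K e f. orthonormal_on K e \<and> orthonormal_on K f \<longrightarrow>
        (\<lambda>k. cmod (hinner (f k) (apply_op B (e k)))) summable_on K \<and>
        (\<Sum>\<^sub>\<infinity>k\<in>K. cmod (hinner (f k) (apply_op B (e k)))) \<le> CB" using tc_C[OF assms(2)] by blast
  have key: "(\<lambda>k. cmod (hinner (f k) (apply_op (\<lambda>i j. A i j + B i j) (e k)))) summable_on K \<and>
        (\<Sum>\<^sub>\<infinity>k\<in>K. cmod (hinner (f k) (apply_op (\<lambda>i j. A i j + B i j) (e k)))) \<le>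
        (\<Sum>\<^sub>\<infinity>k\<in>K. cmod (hinner (f k) (apply_op A (e k)))) + (\<Sum>\<^sub>\<infinity>k\<in>K. cmod (hinner (f k) (apply_op B (e k))))"
    if on: "orthonormal_on K e" "orthonormal_on K f" for K e f
  proof -
    let ?a = "\<lambda>k. cmod (hinner (f k) (apply_op A (e k)))"
    let ?b = "\<lambda>k. cmod (hinner (f k) (apply_op B (e k)))"
    let ?c = "\<lambda>k. cmod (hinner (f k) (apply_op (\<lambda>i j. A i j + B i j) (e k)))"
    have sa: "?a summable_on K" and sb: "?b summable_on K" using CA CB on by auto
    have sab: "(\<lambda>k. ?a k + ?b k) summable_on K" by (rule summable_on_add[OF sa sb])
    have le: "?c k \<le> ?a k + ?b k" if "k \<in> K" for k
      by (rule term_add[OF bA bB on_l2[OF on(2) that] on_l2[OF on(1) that]])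
    have sc: "?c summable_on K"
      by (rule summable_on_comparison_test[OF sab]) (use le in auto)
    have "infsum ?c K \<le> infsum (\<lambda>k. ?a k + ?b k) K" by (rule infsum_mono[OF sc sab]) (use le in auto)
    also have "\<dots> = infsum ?a K + infsum ?b K" by (rule infsum_add[OF sa sb])
    finally show ?thesis using sc by blast
  qed
  show "trace_class (\<lambda>i j. A i j + B i j)"
    unfolding trace_class_def
  proof (intro conjI exI allI impI)
    show "bounded_opr (\<lambda>i j. A i j + B i j)" by (rule bounded_add[OF bA bB])
  next
    fix K :: "'b set" and e f :: "'b \<Rightarrow> 'b hvec" assume on: "orthonormal_on K e \<and> orthonormal_on K f"
    show "(\<lambda>k. cmod (hinner (f k) (apply_op (\<lambda>i j. A i j + B i j) (e k)))) summable_on K" using key on by blast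
    show "(\<Sum>\<^sub>\<infinity>k\<in>K. cmod (hinner (f k) (apply_op (\<lambda>i j. A i j + B i j) (e k)))) \<le> CA + CB"
      using key[of K e f] CA CB on by fastforce
  qed
  have bddA: "bdd_above (tn_sums A)" unfolding tn_sums_def bdd_above_def using CA by blast
  have bddB: "bdd_above (tn_sums B)" unfolding tn_sums_def bdd_above_def using CB by blast
  have ne: "tn_sums (\<lambda>i j. A i j + B i j) \<noteq> {}"
  proof -
    have "orthonormal_on {} (\<lambda>_. (\<lambda>_. 0))" unfolding orthonormal_on_def by simp
    then show ?thesis unfolding tn_sums_def by blast
  qed
  show "trace_norm (\<lambda>i j. A i j + B i j) \<le> trace_norm A + trace_norm B"
    unfolding trace_norm_def
  proof (rule cSup_least[OF ne])
    fix x assume "x \<in> tn_sums (\<lambda>i j. A i j + B i j)"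
    then obtain K e f where on: "orthonormal_on K e" "orthonormal_on K f"
      and x: "x = (\<Sum>\<^sub>\<infinity>k\<in>K. cmod (hinner (f k) (apply_op (\<lambda>i j. A i j + B i j) (e k))))"
      unfolding tn_sums_def by blast
    have "(\<Sum>\<^sub>\<infinity>k\<in>K. cmod (hinner (f k) (apply_op A (e k)))) \<in> tn_sums A"
      unfolding tn_sums_def using on by blast
    then have 1: "(\<Sum>\<^sub>\<infinity>k\<in>K. cmod (hinner (f k) (apply_op A (e k)))) \<le> Sup (tn_sums A)"
      using bddA cSup_upper by blast
    have "(\<Sum>\<^sub>\<infinity>k\<in>K. cmod (hinner (f k) (apply_op B (e k)))) \<in> tn_sums B"
      unfolding tn_sums_def using on by blast
    then have 2: "(\<Sum>\<^sub>\<infinity>k\<in>K. cmod (hinner (f k) (apply_op B (e k)))) \<le> Sup (tn_sums B)"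
      using bddB cSup_upper by blast
    show "x \<le> Sup (tn_sums A) + Sup (tn_sums B)" using key[OF on] 1 2 x by linarith
  qed
qed

lemma tn_nonneg: "trace_class T \<Longrightarrow> trace_norm T \<ge> 0"
proof -
  assume tc: "trace_class T"
  obtain C where C: "\<forall>K e f. orthonormal_on K e \<and> orthonormal_on K f \<longrightarrow>
        (\<lambda>k. cmod (hinner (f k) (apply_op T (e k)))) summable_on K \<and>
        (\<Sum>\<^sub>\<infinity>k\<in>K. cmod (hinner (f k) (apply_op T (e k)))) \<le> C" using tc_C[OF tc] by blast
  have bdd: "bdd_above (tn_sums T)" unfolding tn_sums_def bdd_above_def using C by blast
  have "orthonormal_on {} (\<lambda>_. (\<lambda>_. 0))" unfolding orthonormal_on_def by simp
  then have "(0::real) \<in> tn_sums T" unfolding tn_sums_def by force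
  then show ?thesis unfolding trace_norm_def using bdd cSup_upper by blast
qed


lemma hinner_apply_add:
  fixes A B :: "'b opr"
  assumes "bounded_opr A" "bounded_opr B" "u \<in> l2" "v \<in> l2"
  shows "hinner u (apply_op (\<lambda>i j. A i j + B i j) v) = hinner u (apply_op A v) + hinner u (apply_op B v)"
  unfolding apply_op_add[OF assms(1,2,4)]
  by (rule hinner_add_right) (use assms bounded_l2 in auto)

lemma tc_diag:
  fixes T :: "'b opr"
  assumes "trace_class T"
  shows "(\<lambda>i. T i i) summable_on UNIV"
proof -
  obtain C where C: "\<forall>K e f. orthonormal_on K e \<and> orthonormal_on K f \<longrightarrow>
        (\<lambda>k. cmod (hinner (f k) (apply_op T (e k)))) summable_on K \<and>
        (\<Sum>\<^sub>\<infinity>k\<in>K. cmod (hinner (f k) (apply_op T (e k)))) \<le> C" using tc_C[OF assms] by blast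
  have "(\<lambda>k. cmod (hinner (dlt k) (apply_op T (dlt k)))) summable_on UNIV"
    using C orthonormal_dlt by blast
  then have "(\<lambda>k. norm (T k k)) summable_on UNIV" by (simp add: hinner_dlt apply_op_dlt)
  then show ?thesis by (rule abs_summable_summable)
qed

lemma trace_add:
  fixes A B :: "'b opr"
  assumes "trace_class A" "trace_class B"
  shows "trace (\<lambda>i j. A i j + B i j) = trace A + trace B"
  unfolding trace_def by (rule infsum_add[OF tc_diag[OF assms(1)] tc_diag[OF assms(2)]])

lemma trace_scale: "trace (\<lambda>i j. c * T i j) = c * trace T"
  unfolding trace_def by (rule infsum_cmult_right')

lemma pos_block1:
  fixes T :: "'b opr"
  assumes "positive_opr T"
  shows "block_positive 1 (\<lambda>a b. T)"
  using assms unfolding block_positive_def positive_opr_def by simp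

lemma block1_pos:
  fixes T :: "'b opr"
  assumes "block_positive 1 (\<lambda>a b. T)"
  shows "positive_opr T"
  unfolding positive_opr_def
proof (intro conjI ballI)
  have h: "\<forall>a<(1::nat). \<forall>b<(1::nat). bounded_opr ((\<lambda>a b. T) a b)"
    using assms unfolding block_positive_def by blast
  show "bounded_opr T" using h[rule_format, of 0 0] by simp
  fix v :: "'b hvec" assume v: "v \<in> l2"
  have h2: "\<forall>V::nat \<Rightarrow> 'b hvec. (\<forall>a<(1::nat). V a \<in> l2) \<longrightarrow>
        Im (\<Sum>a<(1::nat). \<Sum>b<(1::nat). hinner (V a) (apply_op T (V b))) = 0 \<and>
        Re (\<Sum>a<(1::nat). \<Sum>b<(1::nat). hinner (V a) (apply_op T (V b))) \<ge> 0"
    using assms unfolding block_positive_def by (rule conjunct2)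
  have "Im (\<Sum>a<(1::nat). \<Sum>b<(1::nat). hinner ((\<lambda>_. v) a) (apply_op T ((\<lambda>_. v) b))) = 0 \<and>
        Re (\<Sum>a<(1::nat). \<Sum>b<(1::nat). hinner ((\<lambda>_. v) a) (apply_op T ((\<lambda>_. v) b))) \<ge> 0"
    by (rule h2[rule_format]) (simp add: v)
  then show "Im (hinner v (apply_op T v)) = 0" "0 \<le> Re (hinner v (apply_op T v))" by simp_all
qed

lemma tc_map_tc: "tc_map \<Phi> \<Longrightarrow> trace_class T \<Longrightarrow> trace_class (\<Phi> T)"
  unfolding tc_map_def by blast

lemma tc_map_lin: "tc_map \<Phi> \<Longrightarrow> trace_class S \<Longrightarrow> trace_class T \<Longrightarrow>
   \<Phi> (\<lambda>i j. a * S i j + b * T i j) = (\<lambda>i j. a * \<Phi> S i j + b * \<Phi> T i j)"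
  unfolding tc_map_def by blast

lemma tc_map_C: "tc_map \<Phi> \<Longrightarrow> \<exists>C. \<forall>T. trace_class T \<longrightarrow> trace_norm (\<Phi> T) \<le> C * trace_norm T"
  unfolding tc_map_def by blast

lemma cp_pos:
  fixes T :: "'b opr"
  assumes "tc_map \<Phi>" "completely_positive \<Phi>" "trace_class T" "positive_opr T"
  shows "positive_opr (\<Phi> T)"
proof -
  have cp: "\<forall>n Tb. (\<forall>a<n. \<forall>b<n. trace_class (Tb a b)) \<and> block_positive n Tb \<longrightarrow>
        block_positive n (\<lambda>a b. \<Phi> (Tb a b))"
    using assms(2) unfolding completely_positive_def .
  have "block_positive 1 (\<lambda>a b. \<Phi> T)"
    using cp[rule_format, of 1 "\<lambda>a b. T"] assms(3) pos_block1[OF assms(4)] by simp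
  then show ?thesis by (rule block1_pos)
qed

lemma trace_pos:
  fixes T :: "'b opr"
  assumes "trace_class T" "positive_opr T"
  shows "Im (trace T) = 0" "Re (trace T) \<ge> 0"
proof -
  have d: "Im (T i i) = 0 \<and> Re (T i i) \<ge> 0" for i
  proof -
    have "\<forall>v\<in>(l2::'b hvec set). Im (hinner v (apply_op T v)) = 0 \<and> Re (hinner v (apply_op T v)) \<ge> 0"
      using assms(2) unfolding positive_opr_def by (rule conjunct2)
    from bspec[OF this dlt_l2[of i]] show ?thesis by (simp add: hinner_dlt apply_op_dlt)
  qed
  have s: "(\<lambda>i. T i i) summable_on UNIV" by (rule tc_diag[OF assms(1)])
  have "Im (trace T) = (\<Sum>\<^sub>\<infinity>i. Im (T i i))" unfolding trace_def by (rule infsum_Im[OF s, symmetric])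
  also have "\<dots> = 0" using d by simp
  finally show "Im (trace T) = 0" .
  have "Re (trace T) = (\<Sum>\<^sub>\<infinity>i. Re (T i i))" unfolding trace_def by (rule infsum_Re[OF s, symmetric])
  also have "\<dots> \<ge> 0" by (rule infsum_nonneg) (use d in auto)
  finally show "Re (trace T) \<ge> 0" .
qed


lemma tc_map_comp:
  fixes \<Phi> \<Psi> :: "'b opr \<Rightarrow> 'b opr"
  assumes P: "tc_map \<Phi>" and Q: "tc_map \<Psi>"
  shows "tc_map (\<lambda>T. \<Phi> (\<Psi> T))"
proof -
  obtain CP where CP: "\<forall>T. trace_class T \<longrightarrow> trace_norm (\<Phi> T) \<le> CP * trace_norm T" using tc_map_C[OF P] by blast
  obtain CQ where CQ: "\<forall>T. trace_class T \<longrightarrow> trace_norm (\<Psi> T) \<le> CQ * trace_norm T" using tc_map_C[OF Q] by blast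
  have b: "trace_norm (\<Phi> (\<Psi> T)) \<le> (max CP 0 * CQ) * trace_norm T" if T: "trace_class T" for T
  proof -
    have tq: "trace_class (\<Psi> T)" by (rule tc_map_tc[OF Q T])
    have "trace_norm (\<Phi> (\<Psi> T)) \<le> CP * trace_norm (\<Psi> T)" using CP tq by blast
    also have "\<dots> \<le> max CP 0 * trace_norm (\<Psi> T)"
      using tn_nonneg[OF tq] by (intro mult_right_mono) auto
    also have "\<dots> \<le> max CP 0 * (CQ * trace_norm T)"
      using CQ T by (intro mult_left_mono) auto
    finally show ?thesis by (simp add: mult.assoc)
  qed
  show ?thesis unfolding tc_map_def
  proof (intro conjI allI impI exI[of _ "max CP 0 * CQ"])
    fix T :: "'b opr" assume "trace_class T"
    then show "trace_class (\<Phi> (\<Psi> T))" using tc_map_tc P Q by blast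
  next
    fix S T :: "'b opr" and a b assume S: "trace_class S" and T: "trace_class T"
    show "\<Phi> (\<Psi> (\<lambda>i j. a * S i j + b * T i j)) = (\<lambda>i j. a * \<Phi> (\<Psi> S) i j + b * \<Phi> (\<Psi> T) i j)"
      unfolding tc_map_lin[OF Q S T] by (rule tc_map_lin[OF P tc_map_tc[OF Q S] tc_map_tc[OF Q T]])
  next
    fix T :: "'b opr" assume "trace_class T"
    then show "trace_norm (\<Phi> (\<Psi> T)) \<le> max CP 0 * CQ * trace_norm T" by (rule b)
  qed
qed

lemma cpD:
  fixes \<Phi> :: "'b opr \<Rightarrow> 'b opr"
  assumes "completely_positive \<Phi>" "\<forall>a<n. \<forall>b<n. trace_class (Tb a b)" "block_positive n Tb"
  shows "block_positive n (\<lambda>a b. \<Phi> (Tb a b))"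
proof -
  have h: "\<forall>n Tb. (\<forall>a<n. \<forall>b<n. trace_class (Tb a b)) \<and> block_positive n Tb \<longrightarrow> block_positive n (\<lambda>a b. \<Phi> (Tb a b))"
    using assms(1) unfolding completely_positive_def .
  show ?thesis using h[rule_format, of n Tb] assms(2,3) by blast
qed

lemma bpD1:
  fixes Tb :: "nat \<Rightarrow> nat \<Rightarrow> 'b opr"
  assumes "block_positive n Tb" "a < n" "b < n"
  shows "bounded_opr (Tb a b)"
proof -
  have "\<forall>a<n. \<forall>b<n. bounded_opr (Tb a b)" using assms(1) unfolding block_positive_def by (rule conjunct1)
  then show ?thesis using assms(2,3) by simp
qed

lemma bpD2:
  fixes Tb :: "nat \<Rightarrow> nat \<Rightarrow> 'b opr"
  assumes "block_positive n Tb" "\<forall>a<n. v a \<in> l2"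
  shows "Im (\<Sum>a<n. \<Sum>b<n. hinner (v a) (apply_op (Tb a b) (v b))) = 0 \<and>
        Re (\<Sum>a<n. \<Sum>b<n. hinner (v a) (apply_op (Tb a b) (v b))) \<ge> 0"
proof -
  have "\<forall>v :: nat \<Rightarrow> 'b hvec. (\<forall>a<n. v a \<in> l2) \<longrightarrow>
        Im (\<Sum>a<n. \<Sum>b<n. hinner (v a) (apply_op (Tb a b) (v b))) = 0 \<and>
        Re (\<Sum>a<n. \<Sum>b<n. hinner (v a) (apply_op (Tb a b) (v b))) \<ge> 0"
    using assms(1) unfolding block_positive_def by (rule conjunct2)
  from mp[OF spec[OF this, of v] assms(2)] show ?thesis .
qed

lemma cp_comp:
  fixes \<Phi> \<Psi> :: "'b opr \<Rightarrow> 'b opr"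
  assumes Q: "tc_map \<Psi>" and cP: "completely_positive \<Phi>" and cQ: "completely_positive \<Psi>"
  shows "completely_positive (\<lambda>T. \<Phi> (\<Psi> T))"
  unfolding completely_positive_def
proof (intro allI impI)
  fix n and Tb :: "nat \<Rightarrow> nat \<Rightarrow> 'b opr"
  assume h: "(\<forall>a<n. \<forall>b<n. trace_class (Tb a b)) \<and> block_positive n Tb"
  have 1: "block_positive n (\<lambda>a b. \<Psi> (Tb a b))"
    using cpD[OF cQ] h by blast
  have 2: "\<forall>a<n. \<forall>b<n. trace_class (\<Psi> (Tb a b))"
    using h tc_map_tc[OF Q] by blast
  show "block_positive n (\<lambda>a b. \<Phi> (\<Psi> (Tb a b)))"
    by (rule cpD[OF cP 2 1])
qed

lemma tc_map_sum:
  fixes \<Phi> \<Psi> :: "'b opr \<Rightarrow> 'b opr"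
  assumes P: "tc_map \<Phi>" and Q: "tc_map \<Psi>"
  shows "tc_map (\<lambda>T i j. \<Phi> T i j + \<Psi> T i j)"
proof -
  obtain CP where CP: "\<forall>T. trace_class T \<longrightarrow> trace_norm (\<Phi> T) \<le> CP * trace_norm T" using tc_map_C[OF P] by blast
  obtain CQ where CQ: "\<forall>T. trace_class T \<longrightarrow> trace_norm (\<Psi> T) \<le> CQ * trace_norm T" using tc_map_C[OF Q] by blast
  show ?thesis unfolding tc_map_def
  proof (intro conjI allI impI exI[of _ "CP + CQ"])
    fix T :: "'b opr" assume T: "trace_class T"
    show "trace_class (\<lambda>i j. \<Phi> T i j + \<Psi> T i j)"
      by (rule tc_add(1)[OF tc_map_tc[OF P T] tc_map_tc[OF Q T]])
  next
    fix S T :: "'b opr" and a b assume S: "trace_class S" and T: "trace_class T"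
    show "(\<lambda>i j. \<Phi> (\<lambda>i j. a * S i j + b * T i j) i j + \<Psi> (\<lambda>i j. a * S i j + b * T i j) i j) =
          (\<lambda>i j. a * (\<Phi> S i j + \<Psi> S i j) + b * (\<Phi> T i j + \<Psi> T i j))"
      unfolding tc_map_lin[OF P S T] tc_map_lin[OF Q S T] by (simp add: algebra_simps)
  next
    fix T :: "'b opr" assume T: "trace_class T"
    have "trace_norm (\<lambda>i j. \<Phi> T i j + \<Psi> T i j) \<le> trace_norm (\<Phi> T) + trace_norm (\<Psi> T)"
      by (rule tc_add(2)[OF tc_map_tc[OF P T] tc_map_tc[OF Q T]])
    also have "\<dots> \<le> CP * trace_norm T + CQ * trace_norm T"
      using CP CQ T by (intro add_mono) auto
    finally show "trace_norm (\<lambda>i j. \<Phi> T i j + \<Psi> T i j) \<le> (CP + CQ) * trace_norm T"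
      by (simp add: distrib_right)
  qed
qed

lemma cp_sum:
  fixes \<Phi> \<Psi> :: "'b opr \<Rightarrow> 'b opr"
  assumes P: "tc_map \<Phi>" and Q: "tc_map \<Psi>" and cP: "completely_positive \<Phi>" and cQ: "completely_positive \<Psi>"
  shows "completely_positive (\<lambda>T i j. \<Phi> T i j + \<Psi> T i j)"
  unfolding completely_positive_def
proof (intro allI impI)
  fix n and Tb :: "nat \<Rightarrow> nat \<Rightarrow> 'b opr"
  assume h: "(\<forall>a<n. \<forall>b<n. trace_class (Tb a b)) \<and> block_positive n Tb"
  have bP: "block_positive n (\<lambda>a b. \<Phi> (Tb a b))"
    using cpD[OF cP] h by blast
  have bQ: "block_positive n (\<lambda>a b. \<Psi> (Tb a b))"
    using cpD[OF cQ] h by blast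
  have bdP: "bounded_opr (\<Phi> (Tb a b))" if "a < n" "b < n" for a b
    using bpD1[OF bP that] by simp
  have bdQ: "bounded_opr (\<Psi> (Tb a b))" if "a < n" "b < n" for a b
    using bpD1[OF bQ that] by simp
  show "block_positive n (\<lambda>a b. \<lambda>i j. \<Phi> (Tb a b) i j + \<Psi> (Tb a b) i j)"
    unfolding block_positive_def
  proof (intro conjI allI impI)
    fix a b assume "a < n" "b < n"
    then show "bounded_opr (\<lambda>i j. \<Phi> (Tb a b) i j + \<Psi> (Tb a b) i j)"
      using bounded_add bdP bdQ by blast
  next
    fix v :: "nat \<Rightarrow> 'b hvec" assume v: "\<forall>a<n. v a \<in> l2"
    have e: "(\<Sum>a<n. \<Sum>b<n. hinner (v a) (apply_op (\<lambda>i j. \<Phi> (Tb a b) i j + \<Psi> (Tb a b) i j) (v b))) =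
          (\<Sum>a<n. \<Sum>b<n. hinner (v a) (apply_op (\<Phi> (Tb a b)) (v b))) +
          (\<Sum>a<n. \<Sum>b<n. hinner (v a) (apply_op (\<Psi> (Tb a b)) (v b)))"
      unfolding sum.distrib[symmetric]
      by (intro sum.cong refl hinner_apply_add bdP bdQ) (use v in auto)
    have p1: "Im (\<Sum>a<n. \<Sum>b<n. hinner (v a) (apply_op (\<Phi> (Tb a b)) (v b))) = 0 \<and>
        Re (\<Sum>a<n. \<Sum>b<n. hinner (v a) (apply_op (\<Phi> (Tb a b)) (v b))) \<ge> 0"
      using bpD2[OF bP v] by simp
    have p2: "Im (\<Sum>a<n. \<Sum>b<n. hinner (v a) (apply_op (\<Psi> (Tb a b)) (v b))) = 0 \<and>
        Re (\<Sum>a<n. \<Sum>b<n. hinner (v a) (apply_op (\<Psi> (Tb a b)) (v b))) \<ge> 0"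
      using bpD2[OF bQ v] by simp
    show "Im (\<Sum>a<n. \<Sum>b<n. hinner (v a) (apply_op (\<lambda>i j. \<Phi> (Tb a b) i j + \<Psi> (Tb a b) i j) (v b))) = 0"
      unfolding e using p1 p2 by simp
    show "Re (\<Sum>a<n. \<Sum>b<n. hinner (v a) (apply_op (\<lambda>i j. \<Phi> (Tb a b) i j + \<Psi> (Tb a b) i j) (v b))) \<ge> 0"
      unfolding e using p1 p2 by simp
  qed
qed



theorem mainTheorem2:
  fixes \<rho> :: "'j::countable \<Rightarrow> 'b::countable opr"
    and f :: "('j \<Rightarrow> real) \<Rightarrow> real"
    and I :: "'j option \<Rightarrow> 'b opr \<Rightarrow> 'b opr"
  assumes "\<forall>j. density_op (\<rho> j)"
    and "evaluation_function f"
    and "optimal_uud f \<rho> I"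
    and "(SUP j. Re (trace (I (Some j) (\<rho> j)))) < 1"
  shows "\<not> uniformly_distinguishable
           (\<lambda>j. (\<lambda>a b. I None (\<rho> j) a b / trace (I None (\<rho> j))))"
proof
  define X where "X j = I None (\<rho> j)" for j
  define c where "c j = trace (X j)" for j
  define \<sigma> where "\<sigma> j = (\<lambda>a b. X j a b / c j)" for j
  assume "uniformly_distinguishable (\<lambda>j. (\<lambda>a b. I None (\<rho> j) a b / trace (I None (\<rho> j))))"
  then obtain I' where uI': "uud_measurement \<sigma> I'"
    unfolding uniformly_distinguishable_def \<sigma>_def c_def X_def by blast
  have uI: "uud_measurement \<rho> I" and opt: "\<not> (\<exists>I'. uud_measurement \<rho> I' \<and> f (success_probs \<rho> I') > f (success_probs \<rho> I))"
    using assms(3) unfolding optimal_uud_def by blast+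
  have insI: "instrument I" and unI: "\<forall>j k. j \<noteq> k \<longrightarrow> trace (I (Some j) (\<rho> k)) = 0"
    and infI: "(INF j. Re (trace (I (Some j) (\<rho> j)))) > 0"
    using uI unfolding uud_measurement_def by blast+
  have insI': "instrument I'" and unI': "\<forall>j k. j \<noteq> k \<longrightarrow> trace (I' (Some j) (\<sigma> k)) = 0"
    and infI': "(INF j. Re (trace (I' (Some j) (\<sigma> j)))) > 0"
    using uI' unfolding uud_measurement_def by blast+
  have tmI: "tc_map (I \<omega>)" and cpI: "completely_positive (I \<omega>)" for \<omega>
    using insI unfolding instrument_def by blast+
  have hsI: "((\<lambda>\<omega>. trace (I \<omega> R)) has_sum trace R) UNIV" if "trace_class R" for R
    using insI that unfolding instrument_def by blast
  have tmI': "tc_map (I' \<omega>)" and cpI': "completely_positive (I' \<omega>)" for \<omega>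
    using insI' unfolding instrument_def by blast+
  have hsI': "((\<lambda>\<omega>. trace (I' \<omega> R)) has_sum trace R) UNIV" if "trace_class R" for R
    using insI' that unfolding instrument_def by blast
  have tcr: "trace_class (\<rho> j)" and posr: "positive_opr (\<rho> j)" and trr: "trace (\<rho> j) = 1" for j
    using assms(1) unfolding density_op_def by blast+
  have tcX: "trace_class (X j)" for j unfolding X_def by (rule tc_map_tc[OF tmI tcr])
  have posX: "positive_opr (X j)" for j unfolding X_def by (rule cp_pos[OF tmI cpI tcr posr])
  have tcIr: "trace_class (I \<omega> (\<rho> j))" for \<omega> j by (rule tc_map_tc[OF tmI tcr])
  have posIr: "positive_opr (I \<omega> (\<rho> j))" for \<omega> j by (rule cp_pos[OF tmI cpI tcr posr])
  define s where "s j = Re (trace (I (Some j) (\<rho> j)))" for j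
  have s_nonneg: "s j \<ge> 0" for j unfolding s_def by (rule trace_pos(2)[OF tcIr posIr])
  have Imc: "Im (c j) = 0" for j unfolding c_def by (rule trace_pos(1)[OF tcX posX])
  have sum1: "c j + trace (I (Some j) (\<rho> j)) = 1" for j
  proof -
    let ?g = "\<lambda>\<omega>. trace (I \<omega> (\<rho> j))"
    have h: "(?g has_sum 1) UNIV" using hsI[OF tcr] trr by simp
    have "(?g has_sum 1) UNIV \<longleftrightarrow> (?g has_sum 1) {None, Some j}"
    proof (rule has_sum_cong_neutral)
      fix x assume "x \<in> UNIV - {None, Some j}"
      then obtain k where "x = Some k" "k \<noteq> j" by (cases x) auto
      then show "?g x = 0" using unI by simp
    qed auto
    with h have h2: "(?g has_sum 1) {None, Some j}" by simp
    have "(?g has_sum (sum ?g {None, Some j})) {None, Some j}" by (rule has_sum_finite) simp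
    then have "sum ?g {None, Some j} = 1" using has_sum_unique h2 by blast
    then show ?thesis unfolding c_def X_def by simp
  qed
  have Rec: "Re (c j) = 1 - s j" for j using arg_cong[OF sum1[of j], of Re] unfolding s_def by simp
  have c_real: "c j = complex_of_real (1 - s j)" for j using Rec[of j] Imc[of j] by (simp add: complex_eq_iff)
  have s_le1: "s j \<le> 1" for j using Rec[of j] trace_pos(2)[OF tcX[of j] posX[of j]] unfolding c_def by simp
  define S where "S = (SUP j. s j)"
  have S1: "S < 1" using assms(4) unfolding S_def s_def by simp
  have sS: "s j \<le> S" for j unfolding S_def by (rule cSUP_upper) (auto intro: bdd_aboveI[of _ 1] simp: s_le1)
  have Rec_pos: "Re (c j) \<ge> 1 - S" "1 - S > 0" for j using sS[of j] Rec[of j] S1 by auto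
  have infs: "(INF j. s j) > 0" using infI unfolding s_def by simp
  have s_pos: "s j > 0" for j
  proof -
    have "(INF j. s j) \<le> s j" by (rule cINF_lower) (auto intro: bdd_belowI[of _ 0] simp: s_nonneg)
    then show ?thesis using infs by simp
  qed
  have c_ne: "c j \<noteq> 0" for j using Rec_pos(1)[of j] Rec_pos(2) by auto
  have key: "trace (I' \<omega> (X k)) = c k * trace (I' \<omega> (\<sigma> k))" for \<omega> k
  proof -
    have e1: "\<sigma> k = (\<lambda>a b. (1 / c k) * X k a b + 0 * X k a b)" unfolding \<sigma>_def by (simp add: divide_inverse mult.commute)
    have "I' \<omega> (\<sigma> k) = (\<lambda>a b. (1 / c k) * I' \<omega> (X k) a b + 0 * I' \<omega> (X k) a b)"
      unfolding e1 by (rule tc_map_lin[OF tmI' tcX tcX])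
    then have "I' \<omega> (\<sigma> k) = (\<lambda>a b. (1 / c k) * I' \<omega> (X k) a b)" by simp
    then have "trace (I' \<omega> (\<sigma> k)) = (1 / c k) * trace (I' \<omega> (X k))" using trace_scale by metis
    then show ?thesis using c_ne[of k] by simp
  qed
  have tcIX: "trace_class (I' \<omega> (X k))" for \<omega> k by (rule tc_map_tc[OF tmI' tcX])
  have posIX: "positive_opr (I' \<omega> (X k))" for \<omega> k by (rule cp_pos[OF tmI' cpI' tcX posX])
  define u where "u j = Re (trace (I' (Some j) (\<sigma> j)))" for j
  have ReIX: "Re (trace (I' (Some j) (X j))) = Re (c j) * u j" for j
    unfolding key u_def using Imc[of j] by simp
  have u_nonneg: "u j \<ge> 0" for j
  proof -
    have "Re (c j) * u j \<ge> 0" unfolding ReIX[symmetric] by (rule trace_pos(2)[OF tcIX posIX])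
    then show ?thesis using Rec_pos(1)[of j] Rec_pos(2) by (simp add: zero_le_mult_iff)
  qed
  have IX_le: "Re (trace (I' (Some j) (X j))) \<le> Re (c j)" for j
  proof -
    have h: "((\<lambda>\<omega>. Re (trace (I' \<omega> (X j)))) has_sum Re (c j)) UNIV"
      unfolding c_def by (rule has_sum_Re[OF hsI'[OF tcX]])
    have "sum (\<lambda>\<omega>. Re (trace (I' \<omega> (X j)))) {Some j} \<le> Re (c j)"
      by (rule finite_sum_le_has_sum[OF h]) (auto intro: trace_pos(2)[OF tcIX posIX])
    then show ?thesis by simp
  qed
  define U where "U = (INF j. u j)"
  have U_pos: "U > 0" using infI' unfolding U_def u_def by simp
  have uU: "U \<le> u j" for j unfolding U_def by (rule cINF_lower) (auto intro: bdd_belowI[of _ 0] simp: u_nonneg)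
  define J :: "'j option \<Rightarrow> 'b opr \<Rightarrow> 'b opr" where
    "J \<omega> = (case \<omega> of None \<Rightarrow> (\<lambda>T. I' None (I None T))
       | Some j \<Rightarrow> (\<lambda>T i k. I (Some j) T i k + I' (Some j) (I None T) i k))" for \<omega>
  have JN: "J None = (\<lambda>T. I' None (I None T))" unfolding J_def by simp
  have JS: "J (Some j) = (\<lambda>T i k. I (Some j) T i k + I' (Some j) (I None T) i k)" for j unfolding J_def by simp
  have tmJ: "tc_map (J \<omega>)" for \<omega>
  proof (cases \<omega>)
    case None then show ?thesis using tc_map_comp[OF tmI' tmI] by (simp add: JN)
  next
    case (Some j) then show ?thesis using tc_map_sum[OF tmI tc_map_comp[OF tmI' tmI]] by (simp add: JS)
  qed
  have cpJ: "completely_positive (J \<omega>)" for \<omega>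
  proof (cases \<omega>)
    case None then show ?thesis using cp_comp[OF tmI cpI' cpI] by (simp add: JN)
  next
    case (Some j) then show ?thesis using cp_sum[OF tmI tc_map_comp[OF tmI' tmI] cpI cp_comp[OF tmI cpI' cpI]] by (simp add: JS)
  qed
  have trJS: "trace (J (Some j) R) = trace (I (Some j) R) + trace (I' (Some j) (I None R))"
    if R: "trace_class R" for j R
    unfolding JS by (rule trace_add[OF tc_map_tc[OF tmI R] tc_map_tc[OF tmI' tc_map_tc[OF tmI R]]])
  have hsJ: "((\<lambda>\<omega>. trace (J \<omega> R)) has_sum trace R) UNIV" if R: "trace_class R" for R
  proof -
    let ?h = "\<lambda>\<omega>. trace (I \<omega> R)"
    let ?h' = "\<lambda>\<omega>. trace (I' \<omega> (I None R))"
    let ?g2 = "\<lambda>\<omega>. if \<omega> = None then ?h None else 0"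
    have 1: "(?h has_sum trace R) UNIV" by (rule hsI[OF R])
    have 2: "(?h' has_sum trace (I None R)) UNIV" by (rule hsI'[OF tc_map_tc[OF tmI R]])
    have 3: "(?g2 has_sum ?h None) UNIV" using has_sum_single_pt[of None ?g2] by force
    have "((\<lambda>\<omega>. (?h \<omega> + - ?g2 \<omega>) + ?h' \<omega>) has_sum ((trace R + - ?h None) + trace (I None R))) UNIV"
      by (intro has_sum_add 1 2 has_sum_uminusI 3)
    moreover have "(\<lambda>\<omega>. (?h \<omega> + - ?g2 \<omega>) + ?h' \<omega>) = (\<lambda>\<omega>. trace (J \<omega> R))"
    proof
      fix \<omega> show "(?h \<omega> + - ?g2 \<omega>) + ?h' \<omega> = trace (J \<omega> R)"
        by (cases \<omega>) (simp_all add: JN trJS[OF R])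
    qed
    ultimately show ?thesis by simp
  qed
  have insJ: "instrument J" unfolding instrument_def using tmJ cpJ hsJ by blast
  have trJr: "trace (J (Some j) (\<rho> k)) = trace (I (Some j) (\<rho> k)) + trace (I' (Some j) (X k))" for j k
    using trJS[OF tcr] unfolding X_def by simp
  have unJ: "\<forall>j k. j \<noteq> k \<longrightarrow> trace (J (Some j) (\<rho> k)) = 0"
  proof (intro allI impI)
    fix j k :: 'j assume jk: "j \<noteq> k"
    show "trace (J (Some j) (\<rho> k)) = 0" unfolding trJr key using unI unI' jk by simp
  qed
  define x where "x = success_probs \<rho> J"
  have xj: "x j = s j + Re (c j) * u j" for j
    unfolding x_def success_probs_def s_def using ReIX[of j] by (simp add: trJr)
  have x_ge: "x j \<ge> s j" for j unfolding xj using Rec_pos(1)[of j] Rec_pos(2) u_nonneg[of j] by simp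
  have x_le: "x j \<le> 1" for j using xj[of j] ReIX[of j] IX_le[of j] Rec[of j] by simp
  have diff: "x j - s j \<ge> (1 - S) * U" for j
  proof -
    have "(1 - S) * U \<le> Re (c j) * u j"
      by (rule mult_mono) (use Rec_pos(1)[of j] Rec_pos(2) uU[of j] U_pos in auto)
    then show ?thesis using xj[of j] by simp
  qed
  have infxs: "(INF j. x j - s j) > 0"
  proof -
    have "(1 - S) * U \<le> (INF j. x j - s j)" by (rule cINF_greatest) (auto simp: diff)
    moreover have "(1 - S) * U > 0" using Rec_pos(2) U_pos by simp
    ultimately show ?thesis by linarith
  qed
  have infx: "(INF j. Re (trace (J (Some j) (\<rho> j)))) > 0"
  proof -
    have sl: "(INF j. s j) \<le> s j" for j by (rule cINF_lower) (auto intro: bdd_belowI[of _ 0] simp: s_nonneg)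
    have "(INF j. s j) \<le> (INF j. x j)"
      by (rule cINF_greatest) (use sl x_ge order_trans in blast)+
    then show ?thesis using infs unfolding x_def success_probs_def by simp
  qed
  have uJ: "uud_measurement \<rho> J" unfolding uud_measurement_def using insJ unJ infx by blast
  have "f x - f (success_probs \<rho> I) > 0"
  proof -
    have sp: "success_probs \<rho> I = s" unfolding success_probs_def s_def by (rule ext) simp
    have ev: "\<forall>x y. (\<forall>j. x j \<in> {0<..1}) \<longrightarrow> (\<forall>j. y j \<in> {0<..1}) \<longrightarrow>
        (INF j. x j - y j) > 0 \<longrightarrow> f x - f y > 0"
      using assms(2) unfolding evaluation_function_def .
    have "\<forall>j. x j \<in> {0<..1}" using x_ge s_pos x_le by (auto intro: less_le_trans)
    moreover have "\<forall>j. s j \<in> {0<..1}" using s_pos s_le1 by auto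
    ultimately show ?thesis unfolding sp using ev infxs by blast
  qed
  then have "f (success_probs \<rho> J) > f (success_probs \<rho> I)" unfolding x_def by simp
  then show False using opt uJ by blast
qed

end
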